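(* Let $\alpha$ be a formula without points-to atoms with $\mathcal P(\alpha)\subseteq\mathcal P_r$, $s$ a store and $h':\mathcal L\to\mathcal L^{\kappa+\nu+\mu}$ a heap. If $(s,h')\models_{\mathcal R_r}\widehat\alpha$, then every location $\ell\in\mathrm{dom}(h')$ with $h'(\ell)=\vec\ell_\bot$ has a connection in $h'$, i.e. there is $\ell'\in\mathrm{dom}(h')$ with $h'(\ell')\ne\vec\ell_\bot$ such that $\ell$ is one of the last $\mu$ components of $h'(\ell')$.
   Context: Separation logic: variables, constant $\bot$; formulas from $x\not\approx x'$, $x\approx x'$, $x\mapsto(t_1,\dots,t_k)$, predicate atoms, $*$, $\vee$, $\exists$. SID: finite set of rules $p(x_1,\dots,x_n)\Leftarrow\pi$. $\mathcal P(\phi)$: predicates reachable (reflexively) from those of $\phi$ through rule bodies. Locations $\mathcal L$ with $\ell_\bot$; stores map variables and $\bot$ to locations with $s(x)=\ell_\bot$ iff $x=\bot$; heaps are finite partial maps $\mathcal L\to\mathcal L^k$ avoiding $\ell_\bot$ in the domain; standard SL semantics $\models$ (predicate atoms via rules with existential variables interpreted by an extension of the store). A rule is connected iff its body is $x_1\mapsto(t_1,\dots,t_k)*\rho$ with $\rho$ free of points-to atoms and every predicate atom in $\rho$ has first argument among $t_1,\dots,t_k$. Standing assumptions: $\mathcal R$ is an SID of progressing rules $p(x_1,\dots,x_n)\Leftarrow x_1\mapsto(y_1,\dots,y_\kappa)*\rho$ (part of a safe entailment problem $(\phi,\psi,\mathcal R)$), $\mathcal P_r=\mathcal P(\psi)$;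 $\vec w=(w_1,\dots,w_\nu)$, $\nu>0$, are variables not occurring in $\mathcal R$; stores considered have $w_1,\dots,w_\nu$ in their domain (hence $s(w_i)\neq\ell_\bot$); every rule of $\mathcal R$ has exactly $\mu$ existential variables. $\vec\bot$ ($\vec\ell_\bot$) is $\kappa+\nu+\mu$ copies of $\bot$ ($\ell_\bot$); $\mathsf{bot}$ is a unary predicate with single rule $\mathsf{bot}(x)\Leftarrow x\mapsto\vec\bot$, included in $\mathcal R_r$. Each $p\in\mathcal P_r$ of arity $n$ gets a fresh $\widehat p$ of arity $n+\nu$; $\widehat\alpha$ replaces each atom $p(x_1,\dots,x_n)$ by $\widehat p(x_1,\dots,x_n,\vec w)$. $\widehat{\mathcal R}_0$ consists of the rules $\widehat p(x_1,\dots,x_n,\vec w)\Leftarrow x_1\mapsto(y_1,\dots,y_\kappa,\vec w,z_1,\dots,z_\mu)\sigma*\widehat\rho\sigma*\mathop{*}_{i\in I}\mathsf{bot}(z_i)*\mathop{*}_{x\in\mathrm{dom}(\sigma)}x\approx\sigma(x)$ for every rule $p(x_1,\dots,x_n)\Leftarrow x_1\mapsto(y_1,\dots,y_\kappa)*\rho$ of $\mathcal R$ with $p\in\mathcal P_r$, fresh $z_1,\dots,z_\mu$, substitution $\sigma$ with $\mathrm{dom}(\sigma)\subseteq\mathrm{fv}(\rho)\setminus\{x_1\}$, $\mathrm{img}(\sigma)\subseteq\{w_1,\dots,w_\nu\}$, and $I\subseteq\{1,\dots,\mu\}$. $\mathcal R_r$ is the set of connected rules of $\widehat{\mathcal R}_0$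 together with the $\mathsf{bot}$ rule. *)

theory Defs
  imports Main
begin

datatype 'v sterm = Var 'v | Bot

datatype ('v, 'p) form =
    Neq "'v sterm" "'v sterm"
  | Eq "'v sterm" "'v sterm"
  | PointsTo "'v sterm" "'v sterm list"
  | Pred 'p "'v sterm list"
  | Star "('v, 'p) form" "('v, 'p) form"
  | Or "('v, 'p) form" "('v, 'p) form"
  | Ex 'v "('v, 'p) form"

type_synonym ('v, 'p) rule = "'p \<times> 'v list \<times> ('v, 'p) form"

fun tvars :: "'v sterm \<Rightarrow> 'v set" where
  "tvars (Var x) = {x}"
| "tvars Bot = {}"

fun fv :: "('v, 'p) form \<Rightarrow> 'v set" where
  "fv (Neq t u) = tvars t \<union> tvars u"
| "fv (Eq t u) = tvars t \<union> tvars u"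
| "fv (PointsTo t ts) = tvars t \<union> \<Union> (tvars ` set ts)"
| "fv (Pred p ts) = \<Union> (tvars ` set ts)"
| "fv (Star a b) = fv a \<union> fv b"
| "fv (Or a b) = fv a \<union> fv b"
| "fv (Ex x a) = fv a - {x}"

fun allvars :: "('v, 'p) form \<Rightarrow> 'v set" where
  "allvars (Neq t u) = tvars t \<union> tvars u"
| "allvars (Eq t u) = tvars t \<union> tvars u"
| "allvars (PointsTo t ts) = tvars t \<union> \<Union> (tvars ` set ts)"
| "allvars (Pred p ts) = \<Union> (tvars ` set ts)"
| "allvars (Star a b) = allvars a \<union> allvars b"
| "allvars (Or a b) = allvars a \<union> allvars b"
| "allvars (Ex x a) = insert x (allvars a)"

definition rule_vars :: "('v, 'p) rule \<Rightarrow> 'v set" where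
  "rule_vars r = (case r of (p, xs, body) \<Rightarrow> set xs \<union> allvars body)"

fun preds :: "('v, 'p) form \<Rightarrow> 'p set" where
  "preds (Pred p ts) = {p}"
| "preds (Star a b) = preds a \<union> preds b"
| "preds (Or a b) = preds a \<union> preds b"
| "preds (Ex x a) = preds a"
| "preds _ = {}"

fun atoms :: "('v, 'p) form \<Rightarrow> ('p \<times> 'v sterm list) set" where
  "atoms (Pred p ts) = {(p, ts)}"
| "atoms (Star a b) = atoms a \<union> atoms b"
| "atoms (Or a b) = atoms a \<union> atoms b"
| "atoms (Ex x a) = atoms a"
| "atoms _ = {}"

fun pto_free :: "('v, 'p) form \<Rightarrow> bool" where
  "pto_free (PointsTo t ts) = False"
| "pto_free (Star a b) = (pto_free a \<and> pto_free b)"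
| "pto_free (Or a b) = (pto_free a \<and> pto_free b)"
| "pto_free (Ex x a) = pto_free a"
| "pto_free _ = True"

inductive_set reach :: "('v, 'p) rule set \<Rightarrow> ('v, 'p) form \<Rightarrow> 'p set"
  for R :: "('v, 'p) rule set" and \<phi> :: "('v, 'p) form" where
  base: "p \<in> preds \<phi> \<Longrightarrow> p \<in> reach R \<phi>"
| step: "p \<in> reach R \<phi> \<Longrightarrow> (p, xs, body) \<in> R \<Longrightarrow> q \<in> preds body \<Longrightarrow> q \<in> reach R \<phi>"

text \<open>Stores are total maps from variables to locations (with no variable mapped to
  the distinguished location \<open>lbot\<close>); the constant bot is interpreted as \<open>lbot\<close>.\<close>

fun tval :: "'l \<Rightarrow> ('v \<Rightarrow> 'l) \<Rightarrow> 'v sterm \<Rightarrow> 'l" where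
  "tval lbot s (Var x) = s x"
| "tval lbot s Bot = lbot"

definition is_store :: "'l \<Rightarrow> ('v \<Rightarrow> 'l) \<Rightarrow> bool" where
  "is_store lbot s \<longleftrightarrow> (\<forall>x. s x \<noteq> lbot)"

definition is_heap :: "'l \<Rightarrow> nat \<Rightarrow> ('l \<rightharpoonup> 'l list) \<Rightarrow> bool" where
  "is_heap lbot k h \<longleftrightarrow> finite (dom h) \<and> lbot \<notin> dom h \<and> (\<forall>l v. h l = Some v \<longrightarrow> length v = k)"

inductive sat :: "('v, 'p) rule set \<Rightarrow> 'l \<Rightarrow> ('v \<Rightarrow> 'l) \<Rightarrow> ('l \<rightharpoonup> 'l list) \<Rightarrow> ('v, 'p) form \<Rightarrow> bool"
  for R :: "('v, 'p) rule set" and lbot :: 'l where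
  sat_eq: "tval lbot s t = tval lbot s u \<Longrightarrow> h = Map.empty \<Longrightarrow> sat R lbot s h (Eq t u)"
| sat_neq: "tval lbot s t \<noteq> tval lbot s u \<Longrightarrow> h = Map.empty \<Longrightarrow> sat R lbot s h (Neq t u)"
| sat_pto: "tval lbot s t \<noteq> lbot \<Longrightarrow> h = [tval lbot s t \<mapsto> map (tval lbot s) ts] \<Longrightarrow>
      sat R lbot s h (PointsTo t ts)"
| sat_star: "dom h1 \<inter> dom h2 = {} \<Longrightarrow> sat R lbot s h1 a \<Longrightarrow> sat R lbot s h2 b \<Longrightarrow>
      sat R lbot s (h1 ++ h2) (Star a b)"
| sat_orL: "sat R lbot s h a \<Longrightarrow> sat R lbot s h (Or a b)"
| sat_orR: "sat R lbot s h b \<Longrightarrow> sat R lbot s h (Or a b)"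
| sat_ex: "v \<noteq> lbot \<Longrightarrow> sat R lbot (s(x := v)) h a \<Longrightarrow> sat R lbot s h (Ex x a)"
| sat_pred: "(p, xs, body) \<in> R \<Longrightarrow> length xs = length ts \<Longrightarrow>
      (\<forall>y. s' y \<noteq> lbot) \<Longrightarrow> (\<forall>i < length xs. s' (xs ! i) = tval lbot s (ts ! i)) \<Longrightarrow>
      sat R lbot s' h body \<Longrightarrow> sat R lbot s h (Pred p ts)"

definition progressing :: "nat \<Rightarrow> ('v, 'p) rule \<Rightarrow> bool" where
  "progressing \<kappa> r = (case r of (p, xs, body) \<Rightarrow>
     xs \<noteq> [] \<and> distinct xs \<and>
     (\<exists>ys \<rho>. body = Star (PointsTo (Var (hd xs)) ys) \<rho> \<and> length ys = \<kappa> \<and> pto_free \<rho>))"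

definition evars :: "('v, 'p) rule \<Rightarrow> 'v set" where
  "evars r = (case r of (p, xs, body) \<Rightarrow> fv body - set xs)"

definition connected :: "('v, 'p) rule \<Rightarrow> bool" where
  "connected r = (case r of (p, xs, body) \<Rightarrow>
     xs \<noteq> [] \<and> (\<exists>ts \<rho>. body = Star (PointsTo (Var (hd xs)) ts) \<rho> \<and> pto_free \<rho> \<and>
        (\<forall>(q, args) \<in> atoms \<rho>. args \<noteq> [] \<and> hd args \<in> set ts)))"

datatype 'p hpred = Hat 'p | BotP

fun hatf :: "'v list \<Rightarrow> ('v, 'p) form \<Rightarrow> ('v, 'p hpred) form" where
  "hatf ws (Neq t u) = Neq t u"
| "hatf ws (Eq t u) = Eq t u"
| "hatf ws (PointsTo t ts) = PointsTo t ts"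
| "hatf ws (Pred p ts) = Pred (Hat p) (ts @ map Var ws)"
| "hatf ws (Star a b) = Star (hatf ws a) (hatf ws b)"
| "hatf ws (Or a b) = Or (hatf ws a) (hatf ws b)"
| "hatf ws (Ex x a) = Ex x (hatf ws a)"

fun tsubst :: "('v \<rightharpoonup> 'v) \<Rightarrow> 'v sterm \<Rightarrow> 'v sterm" where
  "tsubst \<sigma> (Var x) = (case \<sigma> x of Some y \<Rightarrow> Var y | None \<Rightarrow> Var x)"
| "tsubst \<sigma> Bot = Bot"

fun fsubst :: "('v \<rightharpoonup> 'v) \<Rightarrow> ('v, 'p) form \<Rightarrow> ('v, 'p) form" where
  "fsubst \<sigma> (Neq t u) = Neq (tsubst \<sigma> t) (tsubst \<sigma> u)"
| "fsubst \<sigma> (Eq t u) = Eq (tsubst \<sigma> t) (tsubst \<sigma> u)"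
| "fsubst \<sigma> (PointsTo t ts) = PointsTo (tsubst \<sigma> t) (map (tsubst \<sigma>) ts)"
| "fsubst \<sigma> (Pred p ts) = Pred p (map (tsubst \<sigma>) ts)"
| "fsubst \<sigma> (Star a b) = Star (fsubst \<sigma> a) (fsubst \<sigma> b)"
| "fsubst \<sigma> (Or a b) = Or (fsubst \<sigma> a) (fsubst \<sigma> b)"
| "fsubst \<sigma> (Ex x a) = Ex x (fsubst (\<sigma>(x := None)) a)"

text \<open>\<open>\<widehat>\<R>\<^sub>0\<close>: for every rule \<open>p(x\<^sub>1..x\<^sub>n) \<Leftarrow> x\<^sub>1 \<mapsto> (y\<^sub>1..y\<^sub>\<kappa>) * \<rho>\<close> of \<open>\<R>\<close> with \<open>p \<in> \<P>\<^sub>r\<close>,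
  every substitution \<open>\<sigma>\<close> with \<open>dom \<sigma> \<subseteq> fv(\<rho>) - {x\<^sub>1}\<close> and image in \<open>\<vec>w\<close>, and every
  \<open>I \<subseteq> {1..\<mu>}\<close>, the rule
  \<open>\<widehat>p(x\<^sub>1..x\<^sub>n,\<vec>w) \<Leftarrow> x\<^sub>1 \<mapsto> (y\<^sub>1..y\<^sub>\<kappa>,\<vec>w,z\<^sub>1..z\<^sub>\<mu>)\<sigma> * \<widehat>\<rho>\<sigma> * (*\<^sub>i\<^sub>\<in>\<^sub>I bot(z\<^sub>i)) * (*\<^sub>x\<^sub>\<in>\<^sub>d\<^sub>o\<^sub>m\<^sub>\<sigma> x \<approx> \<sigma>(x))\<close>.
  The iterated separating conjunctions are written by enumerating the finite sets \<open>I\<close>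
  and \<open>dom \<sigma>\<close> by duplicate-free lists (any enumeration; all are equivalent).
  Indices of \<open>zs\<close> are 0-based here.\<close>
definition hatR0 :: "('v, 'p) rule set \<Rightarrow> 'p set \<Rightarrow> 'v list \<Rightarrow> 'v list \<Rightarrow> ('v, 'p hpred) rule set" where
  "hatR0 R Pr ws zs = {(Hat p, xs @ ws,
       Star (PointsTo (Var (hd xs)) (map (tsubst \<sigma>) (ys @ map Var ws @ map Var zs)))
            (foldl Star (fsubst \<sigma> (hatf ws \<rho>))
               (map (\<lambda>i. Pred BotP [Var (zs ! i)]) is @ map (\<lambda>x. Eq (Var x) (Var (the (\<sigma> x)))) ds)))
     | p xs ys \<rho> \<sigma> is ds.
       (p, xs, Star (PointsTo (Var (hd xs)) ys) \<rho>) \<in> R \<and> xs \<noteq> [] \<and> p \<in> Pr \<and>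
       dom \<sigma> \<subseteq> fv \<rho> - {hd xs} \<and> ran \<sigma> \<subseteq> set ws \<and>
       distinct is \<and> set is \<subseteq> {..<length zs} \<and> distinct ds \<and> set ds = dom \<sigma>}"

text \<open>The rule \<open>bot(x) \<Leftarrow> x \<mapsto> \<vec>\<bot>\<close> (\<open>\<kappa>+\<nu>+\<mu>\<close> copies of \<open>\<bot>\<close>); the name of the
  (local) head variable is immaterial, we use \<open>w\<^sub>1\<close>.\<close>
definition bot_rule :: "nat \<Rightarrow> 'v list \<Rightarrow> ('v, 'p hpred) rule" where
  "bot_rule k ws = (BotP, [hd ws], PointsTo (Var (hd ws)) (replicate k Bot))"

definition Rr :: "nat \<Rightarrow> ('v, 'p) rule set \<Rightarrow> 'p set \<Rightarrow> 'v list \<Rightarrow> 'v list \<Rightarrow> ('v, 'p hpred) rule set" where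
  "Rr \<kappa> R Pr ws zs = {r \<in> hatR0 R Pr ws zs. connected r} \<union> {bot_rule (\<kappa> + length ws + length zs) ws}"

end

theory Submission
  imports Defs
begin
inductive_cases sat_StarE: "sat R lbot s h (Star a b)"
inductive_cases sat_PtoE: "sat R lbot s h (PointsTo t ts)"

fun okf :: "('v, 'p hpred) form \<Rightarrow> bool" where
  "okf (PointsTo t ts) = (\<exists>x. Var x \<in> set ts)"
| "okf (Star a b) = (okf a \<and> okf b)"
| "okf (Or a b) = (okf a \<and> okf b)"
| "okf (Ex x a) = (okf a \<and> BotP \<notin> preds a)"
| "okf _ = True"

fun bargs :: "('v, 'p hpred) form \<Rightarrow> 'v sterm set" where
  "bargs (Pred BotP ts) = set (take 1 ts)"
| "bargs (Star a b) = bargs a \<union> bargs b"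
| "bargs (Or a b) = bargs a \<union> bargs b"
| "bargs _ = {}"

definition conn :: "'l \<Rightarrow> nat \<Rightarrow> nat \<Rightarrow> ('l \<rightharpoonup> 'l list) \<Rightarrow> 'l \<Rightarrow> bool" where
 "conn lbot K d h l = (\<exists>l'\<in>dom h. h l' \<noteq> Some (replicate K lbot) \<and> l \<in> set (drop d (the (h l'))))"

lemma fv_allvars: "fv \<phi> \<subseteq> allvars \<phi>"
  by (induction \<phi>) auto

lemma bargs_nobot: "BotP \<notin> preds \<phi> \<Longrightarrow> bargs \<phi> = {}"
  by (induction \<phi> rule: bargs.induct) auto

lemma nobot_hat: "BotP \<notin> preds (fsubst \<sigma> (hatf ws \<rho>))"
  by (induction \<rho> arbitrary: \<sigma>) auto

lemma nobot_hat0: "BotP \<notin> preds (hatf ws \<rho>)"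
  by (induction \<rho>) auto

lemma tsubst_var: "\<exists>y. tsubst \<sigma> (Var x) = Var y"
  by (auto split: option.splits)

lemma ok_hat: "pto_free \<rho> \<Longrightarrow> okf (fsubst \<sigma> (hatf ws \<rho>))"
  by (induction \<rho> arbitrary: \<sigma>) (auto simp: nobot_hat)

lemma ok_hat0: "pto_free \<rho> \<Longrightarrow> okf (hatf ws \<rho>)"
  by (induction \<rho>) (auto simp: nobot_hat0)

lemma ok_foldl: "okf (foldl Star F L) = (okf F \<and> (\<forall>x\<in>set L. okf x))"
  by (induction L arbitrary: F) auto

lemma bargs_foldl: "bargs (foldl Star F L) = bargs F \<union> \<Union>(bargs ` set L)"
  by (induction L arbitrary: F) auto

lemma conn_left: "conn lbot K d h1 l \<Longrightarrow> dom h1 \<inter> dom h2 = {} \<Longrightarrow> conn lbot K d (h1 ++ h2) l"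
  unfolding conn_def
  by (metis (no_types, lifting) disjoint_iff_not_equal domIff dom_map_add map_add_def option.simps(4) UnI2 domI)

lemma conn_right: "conn lbot K d h2 l \<Longrightarrow> conn lbot K d (h1 ++ h2) l"
  unfolding conn_def by auto

lemma main:
  assumes s: "sat RR lbot s h \<phi>"
    and RR: "RR = Rr \<kappa> R Pr ws zs"
    and R_prog: "\<forall>r \<in> R. progressing \<kappa> r"
    and ws_len: "length ws = \<nu>" and nu: "\<nu> > 0"
    and zs_len: "length zs = \<mu>"
    and zs_fresh: "\<forall>r \<in> R. set zs \<inter> rule_vars r = {}"
  shows "is_store lbot s \<longrightarrow> okf \<phi> \<longrightarrow> (\<forall>l\<in>dom h. h l = Some (replicate (\<kappa>+\<nu>+\<mu>) lbot) \<longrightarrow>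
     conn lbot (\<kappa>+\<nu>+\<mu>) (\<kappa>+\<nu>) h l \<or> (\<exists>t\<in>bargs \<phi>. l = tval lbot s t))"
  using s
proof (induction rule: sat.induct)
  case (sat_eq s t u h)
  then show ?case by simp
next
  case (sat_neq s t u h)
  then show ?case by simp
next
  case (sat_pto s t h ts)
  show ?case
  proof (intro impI ballI)
    fix l assume st: "is_store lbot s" and ok: "okf (PointsTo t ts)" and l: "l \<in> dom h"
      and hl: "h l = Some (replicate (\<kappa>+\<nu>+\<mu>) lbot)"
    from ok obtain x where x: "Var x \<in> set ts" by auto
    have "s x \<in> set (map (tval lbot s) ts)" using x by force
    moreover have "s x \<noteq> lbot" using st by (simp add: is_store_def)
    moreover have "h l = Some (map (tval lbot s) ts)" using sat_pto l by (auto split: if_splits)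
    ultimately have False using hl by (metis in_set_replicate option.inject)
    then show "conn lbot (\<kappa>+\<nu>+\<mu>) (\<kappa>+\<nu>) h l \<or> (\<exists>t\<in>bargs (PointsTo t ts). l = tval lbot s t)" ..
  qed
next
  case (sat_star h1 h2 s a b)
  show ?case
  proof (intro impI ballI)
    fix l assume st: "is_store lbot s" and ok: "okf (Star a b)" and l: "l \<in> dom (h1 ++ h2)"
      and hl: "(h1 ++ h2) l = Some (replicate (\<kappa>+\<nu>+\<mu>) lbot)"
    show "conn lbot (\<kappa>+\<nu>+\<mu>) (\<kappa>+\<nu>) (h1 ++ h2) l \<or> (\<exists>t\<in>bargs (Star a b). l = tval lbot s t)"
    proof (cases "l \<in> dom h2")
      case True
      then have "h2 l = Some (replicate (\<kappa>+\<nu>+\<mu>) lbot)" using hl by auto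
      then show ?thesis using sat_star.IH(2) st ok True conn_right by fastforce
    next
      case False
      then have "h1 l = Some (replicate (\<kappa>+\<nu>+\<mu>) lbot)" "l \<in> dom h1" using hl l
        by (auto simp: map_add_def split: option.splits)
      then show ?thesis using sat_star.IH(1) st ok conn_left[OF _ sat_star.hyps(1)] by fastforce
    qed
  qed
next
  case (sat_orL s h a b)
  then show ?case by auto
next
  case (sat_orR s h b a)
  then show ?case by auto
next
  case (sat_ex v s x h a)
  show ?case
  proof (intro impI ballI)
    fix l assume st: "is_store lbot s" and ok: "okf (form.Ex x a)" and l: "l \<in> dom h"
      and hl: "h l = Some (replicate (\<kappa>+\<nu>+\<mu>) lbot)"
    have st': "is_store lbot (s(x:=v))" using st sat_ex.hyps(1) by (simp add: is_store_def)
    have "bargs a = {}" using ok bargs_nobot by auto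
    then show "conn lbot (\<kappa>+\<nu>+\<mu>) (\<kappa>+\<nu>) h l \<or> (\<exists>t\<in>bargs (form.Ex x a). l = tval lbot s t)"
      using sat_ex.IH st' ok l hl by (auto simp del: fun_upd_apply)
  qed
next
  case (sat_pred p xs body ts s' s h)
  have st': "is_store lbot s'" using sat_pred.hyps(3) by (simp add: is_store_def)
  from sat_pred.hyps(1) RR
  consider (hat) "(p, xs, body) \<in> hatR0 R Pr ws zs" | (bot) "(p, xs, body) = bot_rule (\<kappa> + length ws + length zs) ws"
    unfolding Rr_def by auto
  then show ?case
  proof cases
    case bot
    then have eqs: "p = BotP" "xs = [hd ws]" "body = PointsTo (Var (hd ws)) (replicate (\<kappa>+\<nu>+\<mu>) Bot)"
      using ws_len zs_len by (auto simp: bot_rule_def)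
    have "length ts = 1" using sat_pred.hyps(2) eqs by simp
    then obtain t0 where ts: "ts = [t0]" by (cases ts) auto
    have "s' (hd ws) = tval lbot s t0" using sat_pred.hyps(4) eqs ts by auto
    moreover have "dom h = {s' (hd ws)}"
    proof -
      have "sat RR lbot s' h (PointsTo (Var (hd ws)) (replicate (\<kappa>+\<nu>+\<mu>) Bot))" using sat_pred.hyps(5) eqs by simp
      then show ?thesis by (rule sat_PtoE) simp
    qed
    ultimately have "\<forall>l\<in>dom h. l = tval lbot s t0" by simp
    moreover have "t0 \<in> bargs (Pred p ts)" using eqs ts by simp
    ultimately show ?thesis by blast
  next
    case hat
    from hat[unfolded hatR0_def mem_Collect_eq] obtain p0 xs0 ys \<rho> \<sigma> "is" ds where
      E: "(p, xs, body) = (Hat p0, xs0 @ ws,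
       Star (PointsTo (Var (hd xs0)) (map (tsubst \<sigma>) (ys @ map Var ws @ map Var zs)))
            (foldl Star (fsubst \<sigma> (hatf ws \<rho>))
               (map (\<lambda>i. Pred BotP [Var (zs ! i)]) is @ map (\<lambda>x. Eq (Var x) (Var (the (\<sigma> x)))) ds)))"
      and inR: "(p0, xs0, Star (PointsTo (Var (hd xs0)) ys) \<rho>) \<in> R" and xs0: "xs0 \<noteq> []"
      and "p0 \<in> Pr"
      and dsig: "dom \<sigma> \<subseteq> fv \<rho> - {hd xs0}" and "ran \<sigma> \<subseteq> set ws"
      and "distinct is" and isz: "set is \<subseteq> {..<length zs}"
      by (elim exE conjE) (rule that, assumption+)
    then have eqs: "p = Hat p0" "xs = xs0 @ ws"
       "body = Star (PointsTo (Var (hd xs0)) (map (tsubst \<sigma>) (ys @ map Var ws @ map Var zs)))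
            (foldl Star (fsubst \<sigma> (hatf ws \<rho>))
               (map (\<lambda>i. Pred BotP [Var (zs ! i)]) is @ map (\<lambda>x. Eq (Var x) (Var (the (\<sigma> x)))) ds))"
      by simp_all
    have prog: "progressing \<kappa> (p0, xs0, Star (PointsTo (Var (hd xs0)) ys) \<rho>)" using R_prog inR by blast
    then have ysl: "length ys = \<kappa>" and ptf: "pto_free \<rho>" unfolding progressing_def by auto
    have zfr: "set zs \<inter> fv \<rho> = {}" using zs_fresh inR fv_allvars unfolding rule_vars_def by fastforce
    have zsig: "\<And>z. z \<in> set zs \<Longrightarrow> tsubst \<sigma> (Var z) = Var z"
    proof -
      fix z assume "z \<in> set zs"
      then have "\<sigma> z = None" using zfr dsig by blast
      then show "tsubst \<sigma> (Var z) = Var z" by simp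
    qed
    obtain w where w: "tsubst \<sigma> (Var (hd ws)) = Var w" using tsubst_var[of \<sigma> "hd ws"] by blast
    have wsne: "ws \<noteq> []" using ws_len nu by auto
    have v1: "Var (hd ws) \<in> set (ys @ map Var ws @ map Var zs)" using wsne by simp
    have vw: "Var w \<in> set (map (tsubst \<sigma>) (ys @ map Var ws @ map Var zs))"
      by (metis imageI[OF v1] w set_map)
    have okF: "okf (fsubst \<sigma> (hatf ws \<rho>))" by (rule ok_hat[OF ptf])
    have okb: "okf body" unfolding eqs(3) okf.simps ok_foldl using vw okF by auto
    have sb: "sat RR lbot s' h (Star (PointsTo (Var (hd xs0)) (map (tsubst \<sigma>) (ys @ map Var ws @ map Var zs)))
            (foldl Star (fsubst \<sigma> (hatf ws \<rho>))
               (map (\<lambda>i. Pred BotP [Var (zs ! i)]) is @ map (\<lambda>x. Eq (Var x) (Var (the (\<sigma> x)))) ds)))"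
      using sat_pred.hyps(5) eqs(3) by simp
    obtain h1 h2 where hh: "h = h1 ++ h2" "dom h1 \<inter> dom h2 = {}"
      and sh1: "sat RR lbot s' h1 (PointsTo (Var (hd xs0)) (map (tsubst \<sigma>) (ys @ map Var ws @ map Var zs)))"
      by (rule sat_StarE[OF sb]) blast
    have h1: "h1 = [s' (hd xs0) \<mapsto> map (tval lbot s') (map (tsubst \<sigma>) (ys @ map Var ws @ map Var zs))]"
      by (rule sat_PtoE[OF sh1]) simp
    define vals where "vals = map (tval lbot s') (map (tsubst \<sigma>) (ys @ map Var ws @ map Var zs))"
    have ha: "h (s' (hd xs0)) = Some vals" using hh h1 vals_def
      by (auto simp: map_add_def split: option.splits)
    have "s' w \<in> set vals" unfolding vals_def
      by (metis imageI[OF vw, of "tval lbot s'"] set_map tval.simps(1))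
    moreover have "s' w \<noteq> lbot" using sat_pred.hyps(3) by auto
    ultimately have notbot: "vals \<noteq> replicate (\<kappa>+\<nu>+\<mu>) lbot" by (metis in_set_replicate)
    have dropv: "drop (\<kappa>+\<nu>) vals = map s' zs" unfolding vals_def using ysl ws_len zsig
      by (simp add: drop_map)
    have bb: "bargs body \<subseteq> (\<lambda>i. Var (zs ! i)) ` set is"
      unfolding eqs(3) bargs.simps bargs_foldl bargs_nobot[OF nobot_hat] by auto
    show ?thesis
    proof (intro impI ballI)
      fix l assume l: "l \<in> dom h" and hl: "h l = Some (replicate (\<kappa>+\<nu>+\<mu>) lbot)"
      from sat_pred.IH st' okb l hl
      have "conn lbot (\<kappa>+\<nu>+\<mu>) (\<kappa>+\<nu>) h l \<or> (\<exists>t\<in>bargs body. l = tval lbot s' t)" by blast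
      then show "conn lbot (\<kappa>+\<nu>+\<mu>) (\<kappa>+\<nu>) h l \<or> (\<exists>t\<in>bargs (Pred p ts). l = tval lbot s t)"
      proof
        assume "conn lbot (\<kappa>+\<nu>+\<mu>) (\<kappa>+\<nu>) h l" then show ?thesis ..
      next
        assume "\<exists>t\<in>bargs body. l = tval lbot s' t"
        then obtain i where i: "i \<in> set is" "l = s' (zs ! i)" using bb by auto
        then have "l \<in> set (drop (\<kappa>+\<nu>) vals)" using dropv isz by auto
        then have "conn lbot (\<kappa>+\<nu>+\<mu>) (\<kappa>+\<nu>) h l" unfolding conn_def using ha notbot
          by (intro bexI[of _ "s' (hd xs0)"]) auto
        then show ?thesis ..
      qed
    qed
  qed
qed
theorem mainTheorem17:
  fixes R :: "('v, 'p) rule set"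
    and \<psi> \<alpha> :: "('v, 'p) form"
    and \<kappa> \<nu> \<mu> :: nat
    and ws zs :: "'v list"
    and lbot :: 'l
    and s :: "'v \<Rightarrow> 'l"
    and h' :: "'l \<rightharpoonup> 'l list"
  assumes R_fin: "finite R"
    and R_prog: "\<forall>r \<in> R. progressing \<kappa> r"
    and R_ex: "\<forall>r \<in> R. card (evars r) = \<mu>"
    and nu_pos: "\<nu> > 0"
    and ws_len: "length ws = \<nu>" and ws_dist: "distinct ws"
    and ws_fresh: "\<forall>r \<in> R. set ws \<inter> rule_vars r = {}"
    and zs_len: "length zs = \<mu>" and zs_dist: "distinct zs"
    and zs_fresh: "\<forall>r \<in> R. set zs \<inter> rule_vars r = {}"
    and zs_ws: "set zs \<inter> set ws = {}"
    and alpha_nopto: "pto_free \<alpha>"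
    and alpha_preds: "reach R \<alpha> \<subseteq> reach R \<psi>"
    and store: "is_store lbot s"
    and heap: "is_heap lbot (\<kappa> + \<nu> + \<mu>) h'"
    and sat: "sat (Rr \<kappa> R (reach R \<psi>) ws zs) lbot s h' (hatf ws \<alpha>)"
  shows "\<forall>l \<in> dom h'. h' l = Some (replicate (\<kappa> + \<nu> + \<mu>) lbot) \<longrightarrow>
           (\<exists>l' \<in> dom h'. h' l' \<noteq> Some (replicate (\<kappa> + \<nu> + \<mu>) lbot) \<and>
              l \<in> set (drop (\<kappa> + \<nu>) (the (h' l'))))"
proof -
  have ok: "okf (hatf ws \<alpha>)" by (rule ok_hat0[OF alpha_nopto])
  have nb: "bargs (hatf ws \<alpha>) = {}" by (rule bargs_nobot[OF nobot_hat0])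
  have "is_store lbot s \<longrightarrow> okf (hatf ws \<alpha>) \<longrightarrow> (\<forall>l\<in>dom h'. h' l = Some (replicate (\<kappa>+\<nu>+\<mu>) lbot) \<longrightarrow>
     conn lbot (\<kappa>+\<nu>+\<mu>) (\<kappa>+\<nu>) h' l \<or> (\<exists>t\<in>bargs (hatf ws \<alpha>). l = tval lbot s t))"
    by (rule main[OF sat refl R_prog ws_len nu_pos zs_len zs_fresh])
  then show ?thesis using store ok nb unfolding conn_def by auto
qed

end
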